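(* Let $d_1\ge\cdots\ge d_n\ge1$ be integers, $\Delta=d_1$, $\xi$ as in the context, and $M_i^*=M_i+M_1$ for $i=2,3$. Then (a) $\xi=O\big(M_3^*(M_2^* )^2/M_1^4+M_4M_3M_2/M_1^5\big)$; (b) if $\Delta=O(\sqrt{M_1})$ then $\xi=O\big(M_3^*(M_2^* )^2/M_1^4\big)$.
   Context: For an integer $k\ge1$, $[x]_k=x(x-1)\cdots(x-k+1)$ and $M_k=\sum_{i=1}^n[d_i]_k$. Define $U_1=\sum_{v}(d_v-2)\min\{[d_v]_2/M_1,1\}$; $U_2=\sum_{u<v}\min\{[d_u]_2[d_v]_2/M_1^2,d_ud_v/M_1\}$; $U_3=\sum_{i\ne j}\sum_{w}\min\{[d_i]_2[d_j]_2/M_1^2,d_id_j/M_1\}\min\{[d_i-2]_2[d_w]_2/M_1^2,1\}(d_w-2)$; $U_4=\sum_{i\ne j}\min\{[d_i]_3[d_j]_2/M_1^2,[d_i]_2d_j/M_1\}$; $U_5=\sum_{i\ne j}\sum_{w}\min\{d_i[d_j]_2/M_1^2,d_j/M_1\}\min\{[d_i-2]_2[d_w]_2/M_1^2,(d_i-2)d_w/M_1\}$; $\xi=U_5+\frac{U_1+U_2^2+U_3}{M_1}+\frac{U_4M_2}{M_1^2}+\frac{U_2M_2^2}{M_1^3}+\frac{M_2}{M_1^2}+\frac{M_3M_2}{M_1^3}+\frac{M_2^3}{M_1^4}$ (vertex indices range over $\{1,\ldots,n\}$). *)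

theory Defs
  imports Complex_Main
begin

text \<open>Falling factorial [x]_k = x(x-1)...(x-k+1), evaluated over the reals
  (so e.g. [-1]_2 = 2).\<close>
definition ff :: "real \<Rightarrow> nat \<Rightarrow> real" where
  "ff x k = (\<Prod>i<k. (x - real i))"

definition Mk :: "nat \<Rightarrow> (nat \<Rightarrow> nat) \<Rightarrow> nat \<Rightarrow> real" where
  "Mk n d k = (\<Sum>i\<in>{1..n}. ff (real (d i)) k)"

definition U1 :: "nat \<Rightarrow> (nat \<Rightarrow> nat) \<Rightarrow> real" where
  "U1 n d = (let M1 = Mk n d 1 in
     \<Sum>v\<in>{1..n}. (real (d v) - 2) * min (ff (real (d v)) 2 / M1) 1)"

definition U2 :: "nat \<Rightarrow> (nat \<Rightarrow> nat) \<Rightarrow> real" where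
  "U2 n d = (let M1 = Mk n d 1 in
     \<Sum>u\<in>{1..n}. \<Sum>v\<in>{u<..n}.
        min (ff (real (d u)) 2 * ff (real (d v)) 2 / M1^2) (real (d u) * real (d v) / M1))"

definition U3 :: "nat \<Rightarrow> (nat \<Rightarrow> nat) \<Rightarrow> real" where
  "U3 n d = (let M1 = Mk n d 1 in
     \<Sum>i\<in>{1..n}. \<Sum>j\<in>{1..n} - {i}. \<Sum>w\<in>{1..n}.
        min (ff (real (d i)) 2 * ff (real (d j)) 2 / M1^2) (real (d i) * real (d j) / M1)
      * min (ff (real (d i) - 2) 2 * ff (real (d w)) 2 / M1^2) 1
      * (real (d w) - 2))"

definition U4 :: "nat \<Rightarrow> (nat \<Rightarrow> nat) \<Rightarrow> real" where
  "U4 n d = (let M1 = Mk n d 1 in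
     \<Sum>i\<in>{1..n}. \<Sum>j\<in>{1..n} - {i}.
        min (ff (real (d i)) 3 * ff (real (d j)) 2 / M1^2) (ff (real (d i)) 2 * real (d j) / M1))"

definition U5 :: "nat \<Rightarrow> (nat \<Rightarrow> nat) \<Rightarrow> real" where
  "U5 n d = (let M1 = Mk n d 1 in
     \<Sum>i\<in>{1..n}. \<Sum>j\<in>{1..n} - {i}. \<Sum>w\<in>{1..n}.
        min (real (d i) * ff (real (d j)) 2 / M1^2) (real (d j) / M1)
      * min (ff (real (d i) - 2) 2 * ff (real (d w)) 2 / M1^2)
            ((real (d i) - 2) * real (d w) / M1))"

definition xi :: "nat \<Rightarrow> (nat \<Rightarrow> nat) \<Rightarrow> real" where
  "xi n d = (let M1 = Mk n d 1; M2 = Mk n d 2; M3 = Mk n d 3 in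
     U5 n d + (U1 n d + (U2 n d)^2 + U3 n d) / M1 + U4 n d * M2 / M1^2
     + U2 n d * M2^2 / M1^3 + M2 / M1^2 + M3 * M2 / M1^3 + M2^3 / M1^4)"

definition degseq :: "nat \<Rightarrow> (nat \<Rightarrow> nat) \<Rightarrow> bool" where
  "degseq n d \<longleftrightarrow> 1 \<le> n \<and> (\<forall>i\<in>{1..n}. 1 \<le> d i) \<and>
     (\<forall>i j. 1 \<le> i \<longrightarrow> i \<le> j \<longrightarrow> j \<le> n \<longrightarrow> d j \<le> d i)"

end

theory Submission imports Defs "HOL-Analysis.Convex" begin
lemma ffs: "ff x (Suc 0) = x" "ff x 1 = x" "ff x 2 = x*(x-1)" "ff x 3 = x*(x-1)*(x-2)" "ff x 4 = x*(x-1)*(x-2)*(x-3)"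
  by (simp_all add: ff_def eval_nat_numeral lessThan_Suc algebra_simps)
lemma natc: "(a::nat)=0 \<or> a=1 \<or> a=2 \<or> a\<ge>3" by auto
lemma ff_nonneg: "0 \<le> ff (real a) k"
proof (cases "k \<le> a")
  case True
  then show ?thesis unfolding ff_def by (auto intro!: prod_nonneg)
next
  case False then have "a \<in> {..<k}" by auto
  then have "ff (real a) k = 0" unfolding ff_def by (simp add: prod_zero_iff) 
  then show ?thesis by simp
qed
lemma ffm2_nonneg: "0 \<le> ff (real a - 2) 2"
  using natc[of a] by (auto simp: ffs)
lemma aux3: "(\<Sum>j\<in>S. c * g j * e / M) = c * (\<Sum>j\<in>S. g j) * e / (M::real)"
  by (simp add: sum_distrib_left sum_distrib_right sum_divide_distrib)
lemma fac: "(\<Sum>i\<in>S. \<Sum>j\<in>S. \<Sum>w\<in>S. f i * g j * h w / M) = (\<Sum>i\<in>S. f i) * (\<Sum>j\<in>S. g j) * (\<Sum>w\<in>S. h w) / (M::real)"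
proof -
  have "\<And>i j. (\<Sum>w\<in>S. f i * g j * h w / M) = (f i * g j) * (\<Sum>w\<in>S. h w) * 1 / M"
    using aux3[where c="f i * g j" and g=h and e=1 and M=M and S=S for i j] by simp
  then have "(\<Sum>i\<in>S. \<Sum>j\<in>S. \<Sum>w\<in>S. f i * g j * h w / M) = (\<Sum>i\<in>S. \<Sum>j\<in>S. f i * g j * (\<Sum>w\<in>S. h w) / M)"
    by simp
  also have "\<And>i. (\<Sum>j\<in>S. f i * g j * (\<Sum>w\<in>S. h w) / M) = f i * (\<Sum>j\<in>S. g j) * (\<Sum>w\<in>S. h w) / M"
    by (rule aux3)
  then have "(\<Sum>i\<in>S. \<Sum>j\<in>S. f i * g j * (\<Sum>w\<in>S. h w) / M) = (\<Sum>i\<in>S. f i * (\<Sum>j\<in>S. g j) * (\<Sum>w\<in>S. h w) / M)"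
    by simp
  also have "\<dots> = (\<Sum>i\<in>S. f i) * (\<Sum>j\<in>S. g j) * (\<Sum>w\<in>S. h w) / M"
    using aux3[where c=1 and g=f and e="(\<Sum>j\<in>S. g j) * (\<Sum>w\<in>S. h w)" and S=S and M=M] by (simp add: mult.assoc)
  finally show ?thesis .
qed

lemma T1: assumes "M > 0"
  shows "(real a - 2) * min (ff (real a) 2 / M) 1 \<le> ff (real a) 3 / M"
proof (cases "a \<ge> 2")
  case True
  then have "(real a - 2) * min (ff (real a) 2 / M) 1 \<le> (real a - 2) * (ff (real a) 2 / M)"
    by (intro mult_left_mono) auto
  also have "\<dots> = ff (real a) 3 / M" by (simp add: ffs algebra_simps)
  finally show ?thesis .
next
  case False then have "a = 0 \<or> a = 1" by auto
  then show ?thesis using assms by (auto simp: ffs)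
qed

lemma T2: assumes "M > 0"
  shows "0 \<le> min (ff (real a) 2 * ff (real b) 2 / M^2) (real a * real b / M)"
  using assms ff_nonneg[of a 2] ff_nonneg[of b 2] by auto

lemma T3: assumes "M > 0"
  shows "min (ff (real a) 2 * ff (real b) 2 / M^2) (real a * real b / M)
      * min (ff (real a - 2) 2 * ff (real c) 2 / M^2) 1 * (real c - 2)
      \<le> ff (real a) 4 * ff (real b) 2 * ff (real c) 3 / M^4"
proof -
  define p where "p = min (ff (real a) 2 * ff (real b) 2 / M^2) (real a * real b / M)"
  define q where "q = min (ff (real a - 2) 2 * ff (real c) 2 / M^2) 1"
  have p0: "0 \<le> p" unfolding p_def by (rule T2[OF assms])
  have q0: "0 \<le> q" unfolding q_def using assms ffm2_nonneg[of a] ff_nonneg[of c 2] by auto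
  have R0: "0 \<le> ff (real a) 4 * ff (real b) 2 * ff (real c) 3 / M^4"
    using assms ff_nonneg[of a 4] ff_nonneg[of b 2] ff_nonneg[of c 3] by auto
  show ?thesis
  proof (cases "c \<ge> 2")
    case False
    then have "real c - 2 \<le> 0" by auto
    then have "p * q * (real c - 2) \<le> 0" using p0 q0 by (simp add: mult_nonneg_nonpos)
    then show ?thesis using R0 unfolding p_def q_def by linarith
  next
    case True
    have "p * q * (real c - 2) \<le> (ff (real a) 2 * ff (real b) 2 / M^2) * (ff (real a - 2) 2 * ff (real c) 2 / M^2) * (real c - 2)"
      unfolding p_def q_def using True p0 q0 unfolding p_def q_def
      by (intro mult_right_mono mult_mono) auto
    also have "\<dots> = ff (real a) 4 * ff (real b) 2 * ff (real c) 3 / M^4"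
      using assms by (simp add: ffs field_simps power_def)
    finally show ?thesis unfolding p_def q_def .
  qed
qed

lemma ff4_le: assumes "real a \<le> D" shows "ff (real a) 4 \<le> D^2 * ff (real a) 2"
proof (cases "a \<ge> 2")
  case True
  have "(real a - 2) * (real a - 3) \<le> D^2"
  proof -
    have "(real a - 2) * (real a - 3) \<le> real a ^ 2" using True by (simp add: power2_eq_square algebra_simps)
    also have "\<dots> \<le> D^2" using assms by (intro power_mono) auto
    finally show ?thesis .
  qed
  then have "ff (real a) 2 * ((real a - 2) * (real a - 3)) \<le> ff (real a) 2 * D^2"
    using ff_nonneg[of a 2] by (intro mult_left_mono) auto
  then show ?thesis by (simp add: ffs algebra_simps)
next
  case False then have "a = 0 \<or> a = 1" by auto
  then show ?thesis by (auto simp: ffs)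
qed

lemma T4: "min (ff (real a) 3 * ff (real b) 2 / M^2) (ff (real a) 2 * real b / M)
   \<le> ff (real a) 3 * ff (real b) 2 / M^2" by simp

lemma T5: assumes "M > 0"
  shows "min (real a * ff (real b) 2 / M^2) (real b / M)
      * min (ff (real a - 2) 2 * ff (real c) 2 / M^2) ((real a - 2) * real c / M)
      \<le> ff (real a) 3 * ff (real b) 2 * ff (real c) 2 / M^4"
proof -
  define p where "p = min (real a * ff (real b) 2 / M^2) (real b / M)"
  define q where "q = min (ff (real a - 2) 2 * ff (real c) 2 / M^2) ((real a - 2) * real c / M)"
  have p0: "0 \<le> p" unfolding p_def using assms ff_nonneg[of b 2] by auto
  have R0: "0 \<le> ff (real a) 3 * ff (real b) 2 * ff (real c) 2 / M^4"
    using assms ff_nonneg[of a 3] ff_nonneg[of b 2] ff_nonneg[of c 2] by auto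
  consider "a \<le> 1" | "a = 2" | "a \<ge> 3" by linarith
  then show ?thesis
  proof cases
    case 1
    then have "(real a - 2) * real c / M \<le> 0" using assms
      by (simp add: divide_nonpos_pos mult_nonpos_nonneg)
    then have "q \<le> 0" unfolding q_def by linarith
    then have "p * q \<le> 0" using p0 by (simp add: mult_nonneg_nonpos)
    then show ?thesis using R0 unfolding p_def q_def by linarith
  next
    case 2 then show ?thesis using R0 by (simp add: ffs)
  next
    case 3
    have q0: "0 \<le> q" unfolding q_def using 3 assms ffm2_nonneg[of a] ff_nonneg[of c 2] by auto
    have "p * q \<le> (real a * ff (real b) 2 / M^2) * (ff (real a - 2) 2 * ff (real c) 2 / M^2)"
      unfolding p_def q_def using p0 q0 unfolding p_def q_def
      by (intro mult_mono) auto
    also have "\<dots> = (real a * ((real a - 2) * (real a - 3))) * ff (real b) 2 * ff (real c) 2 / M^4"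
      using assms by (simp add: ffs field_simps power_def)
    also have "\<dots> \<le> ff (real a) 3 * ff (real b) 2 * ff (real c) 2 / M^4"
    proof -
      have "real a * ((real a - 2) * (real a - 3)) \<le> ff (real a) 3"
        using 3 by (simp add: ffs algebra_simps)
      then show ?thesis using assms ff_nonneg[of b 2] ff_nonneg[of c 2]
        by (intro divide_right_mono mult_right_mono) auto
    qed
    finally show ?thesis unfolding p_def q_def .
  qed
qed

lemma Mk_nonneg: "0 \<le> Mk n d k" unfolding Mk_def by (intro sum_nonneg ff_nonneg)

lemma drop_i: fixes g :: "nat \<Rightarrow> real" assumes "finite S" "\<And>j. j \<in> S \<Longrightarrow> 0 \<le> g j"
  shows "(\<Sum>j\<in>S - {i}. g j) \<le> (\<Sum>j\<in>S. g j)"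
  using assms by (intro sum_mono2) (auto simp del: sum_diff1)

lemma U1_bd: assumes "Mk n d 1 > 0" shows "U1 n d \<le> Mk n d 3 / Mk n d 1"
  unfolding U1_def Let_def Mk_def[of n d 3] sum_divide_distrib
  by (intro sum_mono T1) (use assms in auto)

lemma U2_bds: assumes "Mk n d 1 > 0"
  shows "0 \<le> U2 n d" "U2 n d \<le> Mk n d 2 * Mk n d 2 / Mk n d 1 ^ 2"
proof -
  let ?M = "Mk n d 1"
  show "0 \<le> U2 n d" unfolding U2_def Let_def
    by (intro sum_nonneg T2) (use assms in auto)
  have "U2 n d \<le> (\<Sum>u\<in>{1..n}. \<Sum>v\<in>{u<..n}. ff (real (d u)) 2 * ff (real (d v)) 2 / ?M^2)"
    unfolding U2_def Let_def by (intro sum_mono) simp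
  also have "\<dots> \<le> (\<Sum>u\<in>{1..n}. \<Sum>v\<in>{1..n}. ff (real (d u)) 2 * ff (real (d v)) 2 / ?M^2)"
    by (intro sum_mono sum_mono2) (auto intro!: divide_nonneg_nonneg mult_nonneg_nonneg ff_nonneg)
  also have "\<dots> = Mk n d 2 * Mk n d 2 / ?M ^ 2"
    unfolding Mk_def[of n d 2] by (simp add: sum_product sum_divide_distrib)
  finally show "U2 n d \<le> Mk n d 2 * Mk n d 2 / ?M ^ 2" .
qed

lemma U4_bd: assumes "Mk n d 1 > 0" shows "U4 n d \<le> Mk n d 3 * Mk n d 2 / Mk n d 1 ^ 2"
proof -
  let ?M = "Mk n d 1"
  have "U4 n d \<le> (\<Sum>i\<in>{1..n}. \<Sum>j\<in>{1..n}-{i}. ff (real (d i)) 3 * ff (real (d j)) 2 / ?M^2)"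
    unfolding U4_def Let_def by (intro sum_mono T4)
  also have "\<dots> \<le> (\<Sum>i\<in>{1..n}. \<Sum>j\<in>{1..n}. ff (real (d i)) 3 * ff (real (d j)) 2 / ?M^2)"
    by (intro sum_mono drop_i) (auto intro!: divide_nonneg_nonneg mult_nonneg_nonneg ff_nonneg)
  also have "\<dots> = Mk n d 3 * Mk n d 2 / ?M ^ 2"
    unfolding Mk_def[of n d 2] Mk_def[of n d 3] by (simp add: sum_product sum_divide_distrib)
  finally show ?thesis .
qed

lemma U5_bd: assumes "Mk n d 1 > 0" shows "U5 n d \<le> Mk n d 3 * Mk n d 2 * Mk n d 2 / Mk n d 1 ^ 4"
proof -
  let ?M = "Mk n d 1"
  have "U5 n d \<le> (\<Sum>i\<in>{1..n}. \<Sum>j\<in>{1..n}-{i}. \<Sum>w\<in>{1..n}. ff (real (d i)) 3 * ff (real (d j)) 2 * ff (real (d w)) 2 / ?M^4)"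
    unfolding U5_def Let_def by (intro sum_mono T5 assms)
  also have "\<dots> \<le> (\<Sum>i\<in>{1..n}. \<Sum>j\<in>{1..n}. \<Sum>w\<in>{1..n}. ff (real (d i)) 3 * ff (real (d j)) 2 * ff (real (d w)) 2 / ?M^4)"
    by (intro sum_mono drop_i) (auto intro!: sum_nonneg divide_nonneg_nonneg mult_nonneg_nonneg ff_nonneg)
  also have "\<dots> = Mk n d 3 * Mk n d 2 * Mk n d 2 / ?M ^ 4"
    unfolding Mk_def by (rule fac)
  finally show ?thesis .
qed

lemma U3_bd: assumes "Mk n d 1 > 0" shows "U3 n d \<le> Mk n d 4 * Mk n d 2 * Mk n d 3 / Mk n d 1 ^ 4"
proof -
  let ?M = "Mk n d 1"
  have "U3 n d \<le> (\<Sum>i\<in>{1..n}. \<Sum>j\<in>{1..n}-{i}. \<Sum>w\<in>{1..n}. ff (real (d i)) 4 * ff (real (d j)) 2 * ff (real (d w)) 3 / ?M^4)"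
    unfolding U3_def Let_def by (intro sum_mono T3 assms)
  also have "\<dots> \<le> (\<Sum>i\<in>{1..n}. \<Sum>j\<in>{1..n}. \<Sum>w\<in>{1..n}. ff (real (d i)) 4 * ff (real (d j)) 2 * ff (real (d w)) 3 / ?M^4)"
    by (intro sum_mono drop_i) (auto intro!: sum_nonneg divide_nonneg_nonneg mult_nonneg_nonneg ff_nonneg)
  also have "\<dots> = Mk n d 4 * Mk n d 2 * Mk n d 3 / ?M ^ 4"
    unfolding Mk_def by (rule fac)
  finally show ?thesis .
qed

lemma U3_bd': assumes "Mk n d 1 > 0" "\<And>i. i \<in> {1..n} \<Longrightarrow> real (d i) \<le> D"
  shows "U3 n d \<le> D^2 * Mk n d 2 * Mk n d 2 * Mk n d 3 / Mk n d 1 ^ 4"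
proof -
  let ?M = "Mk n d 1"
  have "U3 n d \<le> (\<Sum>i\<in>{1..n}. \<Sum>j\<in>{1..n}-{i}. \<Sum>w\<in>{1..n}. ff (real (d i)) 4 * ff (real (d j)) 2 * ff (real (d w)) 3 / ?M^4)"
    unfolding U3_def Let_def by (intro sum_mono T3 assms)
  also have "\<dots> \<le> (\<Sum>i\<in>{1..n}. \<Sum>j\<in>{1..n}. \<Sum>w\<in>{1..n}. ff (real (d i)) 4 * ff (real (d j)) 2 * ff (real (d w)) 3 / ?M^4)"
    by (intro sum_mono drop_i) (auto intro!: sum_nonneg divide_nonneg_nonneg mult_nonneg_nonneg ff_nonneg)
  also have "\<dots> \<le> (\<Sum>i\<in>{1..n}. \<Sum>j\<in>{1..n}. \<Sum>w\<in>{1..n}. (D^2 * ff (real (d i)) 2) * ff (real (d j)) 2 * ff (real (d w)) 3 / ?M^4)"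
    using assms by (intro sum_mono divide_right_mono mult_right_mono ff4_le) (auto intro!: mult_nonneg_nonneg ff_nonneg)
  also have "\<dots> = (\<Sum>i\<in>{1..n}. D^2 * ff (real (d i)) 2) * Mk n d 2 * Mk n d 3 / ?M ^ 4"
    unfolding Mk_def by (rule fac)
  also have "\<dots> = D^2 * Mk n d 2 * Mk n d 2 * Mk n d 3 / ?M ^ 4"
    unfolding Mk_def by (simp add: sum_distrib_left)
  finally show ?thesis .
qed
lemma M2_le: "Mk n d 2 \<le> Mk n d 3 + Mk n d 1"
proof -
  have "\<And>a::nat. ff (real a) 2 \<le> ff (real a) 3 + ff (real a) 1"
  proof -
    fix a :: nat
    consider "a \<le> 2" | "a \<ge> 3" by linarith
    then show "ff (real a) 2 \<le> ff (real a) 3 + ff (real a) 1"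
    proof cases
      case 1 then have "a = 0 \<or> a = 1 \<or> a = 2" by auto
      then show ?thesis by (auto simp: ffs)
    next
      case 2
      have "real a * (real a - 1) \<le> real a * (real a - 1) * (real a - 2)"
        using mult_left_mono[of 1 "real a - 2" "real a*(real a-1)"] 2 by simp
      then show ?thesis unfolding ffs by simp
    qed
  qed
  then show ?thesis unfolding Mk_def sum.distrib[symmetric] by (intro sum_mono) auto
qed

lemma CS: "Mk n d 2 ^ 2 \<le> Mk n d 1 * (Mk n d 3 + Mk n d 2)"
proof -
  let ?a = "\<lambda>i. sqrt (real (d i))" and ?b = "\<lambda>i. sqrt (real (d i)) * (real (d i) - 1)"
  have e1: "Mk n d 2 = (\<Sum>i\<in>{1..n}. ?a i * ?b i)"
    unfolding Mk_def by (intro sum.cong) (auto simp: ffs mult.assoc[symmetric])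
  have e2: "Mk n d 1 = (\<Sum>i\<in>{1..n}. (?a i)^2)"
    unfolding Mk_def by (intro sum.cong) (auto simp: ffs)
  have e3: "Mk n d 3 + Mk n d 2 = (\<Sum>i\<in>{1..n}. (?b i)^2)"
    unfolding Mk_def sum.distrib[symmetric] by (intro sum.cong) (auto simp: ffs power_mult_distrib power2_eq_square algebra_simps)
  have "(\<Sum>i\<in>{1..n}. ?a i * ?b i)^2 \<le> (\<Sum>i\<in>{1..n}. (?a i)^2) * (\<Sum>i\<in>{1..n}. (?b i)^2)"
    by (rule Cauchy_Schwarz_ineq_sum)
  then show ?thesis by (simp only: e1[symmetric] e2[symmetric] e3[symmetric])
qed

lemma alg:
  fixes m1 m2 m3 u1 u2 u3 u4 u5 T :: real
  assumes m1: "m1 > 0" and m2: "m2 \<ge> 0" and m3: "m3 \<ge> 0" and m23: "m2 \<le> m3 + m1"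
    and cs: "m2^2 \<le> m1 * (m3 + m2)"
    and b1: "u1 \<le> m3 / m1" and b2a: "0 \<le> u2" and b2: "u2 \<le> m2 * m2 / m1^2"
    and b3: "u3 \<le> T" and b4: "u4 \<le> m3 * m2 / m1^2" and b5: "u5 \<le> m3 * m2 * m2 / m1^4"
  shows "u5 + (u1 + u2^2 + u3) / m1 + u4 * m2 / m1^2 + u2 * m2^2 / m1^3 + m2 / m1^2
     + m3 * m2 / m1^3 + m2^3 / m1^4 \<le> 10 * ((m3 + m1) * (m2 + m1)^2 / m1^4) + T / m1"
proof -
  define A where "A = (m3 + m1) * (m2 + m1)^2"
  have h1: "u2^2 \<le> (m2 * m2 / m1^2)^2" using b2a b2 by (intro power_mono) auto
  have h2: "(u1 + u2^2 + u3) / m1 \<le> (m3 / m1 + (m2 * m2 / m1^2)^2 + T) / m1"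
    using h1 b1 b3 m1 by (intro divide_right_mono) auto
  have h3: "u4 * m2 / m1^2 \<le> m3 * m2 / m1^2 * m2 / m1^2"
    using b4 m1 m2 by (intro divide_right_mono mult_right_mono) auto
  have h4: "u2 * m2^2 / m1^3 \<le> m2 * m2 / m1^2 * m2^2 / m1^3"
    using b2 m1 m2 by (intro divide_right_mono mult_right_mono) auto
  define N where "N = (m3*m2^2)*m1 + (m3*m1^2)*m1 + m2^2*m2^2 + (m3*m2^2)*m1 + m2^2*m2^2
     + (m2*m1^2)*m1 + (m3*(m2*m1))*m1 + m2^3*m1"
  have eq: "m3 * m2 * m2 / m1^4 + (m3 / m1 + (m2 * m2 / m1^2)^2) / m1 + m3 * m2 / m1^2 * m2 / m1^2
     + m2 * m2 / m1^2 * m2^2 / m1^3 + m2 / m1^2 + m3 * m2 / m1^3 + m2^3 / m1^4 = N / m1^5"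
    unfolding N_def using m1 by (simp add: field_simps power2_eq_square power3_eq_cube eval_nat_numeral)
  have sq: "m2^2 \<le> (m2+m1)^2" "m1^2 \<le> (m2+m1)^2" "m2*m1 \<le> (m2+m1)^2"
    using m1 m2 by (auto simp: power2_eq_square algebra_simps)
  have g1: "m3*m2^2 \<le> A" unfolding A_def using sq m1 m3 by (intro mult_mono) auto
  have g2: "m3*m1^2 \<le> A" unfolding A_def using sq m1 m3 by (intro mult_mono) auto
  have g4: "m2*m1^2 \<le> A" unfolding A_def using sq m1 m3 m23 by (intro mult_mono) auto
  have g5: "m3*(m2*m1) \<le> A" unfolding A_def using sq m1 m2 m3 by (intro mult_mono) auto
  have g6: "m2^3 \<le> A"
  proof -
    have "m2*m2^2 \<le> (m3+m1)*(m2+m1)^2" using sq m1 m3 m23 m2 by (intro mult_mono) auto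
    then show ?thesis unfolding A_def by (simp add: power2_eq_square power3_eq_cube)
  qed
  have g3: "m2^2*m2^2 \<le> 2*(A*m1)"
  proof -
    have "m2^2 \<le> 2*m1*(m3+m1)" 
    proof -
      have "m1*(m3+m2) \<le> m1*(2*(m3+m1))" using m23 m3 m1 by (intro mult_left_mono) auto
      then show ?thesis using cs by (simp add: algebra_simps)
    qed
    then have "m2^2*m2^2 \<le> (2*m1*(m3+m1))*(m2+m1)^2" using sq m1 m3 by (intro mult_mono) auto
    then show ?thesis unfolding A_def by (simp add: algebra_simps)
  qed
  have "N \<le> 10 * (A * m1)"
  proof -
    have "(m3*m2^2)*m1 \<le> A*m1" "(m3*m1^2)*m1 \<le> A*m1" "(m2*m1^2)*m1 \<le> A*m1"
      "(m3*(m2*m1))*m1 \<le> A*m1" "m2^3*m1 \<le> A*m1"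
      using g1 g2 g4 g5 g6 m1 by (auto intro: mult_right_mono)
    then show ?thesis unfolding N_def using g3 by linarith
  qed
  then have "N / m1^5 \<le> 10 * (A * m1) / m1^5" using m1 by (intro divide_right_mono) auto
  also have "\<dots> = 10 * (A / m1^4)" using m1 by (simp add: field_simps eval_nat_numeral)
  finally have "N / m1^5 \<le> 10 * (A / m1^4)" .
  then show ?thesis using h2 h3 h4 b5 eq unfolding A_def add_divide_distrib by linarith
qed
lemma m1_pos: assumes "degseq n d" shows "Mk n d 1 > 0"
proof -
  have "Mk n d 1 = (\<Sum>i\<in>{1..n}. real (d i))" unfolding Mk_def by (simp add: ffs)
  also have "\<dots> > 0" using assms unfolding degseq_def
    by (intro sum_pos) (auto intro: Suc_le_lessD)
  finally show ?thesis .
qed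

lemma xi_gen: assumes "degseq n d" "U3 n d \<le> T"
  shows "xi n d \<le> 10 * ((Mk n d 3 + Mk n d 1) * (Mk n d 2 + Mk n d 1)^2 / (Mk n d 1)^4) + T / Mk n d 1"
proof -
  have p: "Mk n d 1 > 0" by (rule m1_pos[OF assms(1)])
  show ?thesis unfolding xi_def Let_def
    by (rule alg[OF p Mk_nonneg Mk_nonneg M2_le CS U1_bd[OF p] U2_bds[OF p] assms(2) U4_bd[OF p] U5_bd[OF p]])
qed

theorem corollary4p1:
  shows "(\<exists>C>0. \<forall>n d. degseq n d \<longrightarrow>
            xi n d \<le> C * ((Mk n d 3 + Mk n d 1) * (Mk n d 2 + Mk n d 1)^2 / (Mk n d 1)^4
                        + Mk n d 4 * Mk n d 3 * Mk n d 2 / (Mk n d 1)^5))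
       \<and> (\<forall>K. \<exists>C>0. \<forall>n d. degseq n d \<longrightarrow> real (d 1) \<le> K * sqrt (Mk n d 1) \<longrightarrow>
            xi n d \<le> C * ((Mk n d 3 + Mk n d 1) * (Mk n d 2 + Mk n d 1)^2 / (Mk n d 1)^4))"
proof
  show "\<exists>C>0. \<forall>n d. degseq n d \<longrightarrow>
            xi n d \<le> C * ((Mk n d 3 + Mk n d 1) * (Mk n d 2 + Mk n d 1)^2 / (Mk n d 1)^4
                        + Mk n d 4 * Mk n d 3 * Mk n d 2 / (Mk n d 1)^5)"
  proof (intro exI[of _ 10] conjI allI impI)
    fix n d assume ds: "degseq n d"
    have p: "Mk n d 1 > 0" by (rule m1_pos[OF ds])
    let ?A = "(Mk n d 3 + Mk n d 1) * (Mk n d 2 + Mk n d 1)^2 / (Mk n d 1)^4"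
    let ?B = "Mk n d 4 * Mk n d 3 * Mk n d 2 / (Mk n d 1)^5"
    have "xi n d \<le> 10 * ?A + Mk n d 4 * Mk n d 2 * Mk n d 3 / Mk n d 1 ^ 4 / Mk n d 1"
      by (rule xi_gen[OF ds U3_bd[OF p]])
    also have "Mk n d 4 * Mk n d 2 * Mk n d 3 / Mk n d 1 ^ 4 / Mk n d 1 = ?B"
      by (simp add: field_simps eval_nat_numeral)
    also have "?B \<le> 10 * ?B"
    proof -
      have "0 \<le> ?B" using p by (intro divide_nonneg_nonneg mult_nonneg_nonneg Mk_nonneg) auto
      then show ?thesis by linarith
    qed
    finally show "xi n d \<le> 10 * (?A + ?B)" by (simp add: algebra_simps)
  qed simp
next
  show "\<forall>K. \<exists>C>0. \<forall>n d. degseq n d \<longrightarrow> real (d 1) \<le> K * sqrt (Mk n d 1) \<longrightarrow>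
            xi n d \<le> C * ((Mk n d 3 + Mk n d 1) * (Mk n d 2 + Mk n d 1)^2 / (Mk n d 1)^4)"
  proof (intro allI)
    fix K :: real
    show "\<exists>C>0. \<forall>n d. degseq n d \<longrightarrow> real (d 1) \<le> K * sqrt (Mk n d 1) \<longrightarrow>
            xi n d \<le> C * ((Mk n d 3 + Mk n d 1) * (Mk n d 2 + Mk n d 1)^2 / (Mk n d 1)^4)"
    proof (intro exI[of _ "10 + K^2"] conjI allI impI)
      show "0 < 10 + K^2" by (simp add: add_pos_nonneg)
      fix n d assume ds: "degseq n d" and dK: "real (d 1) \<le> K * sqrt (Mk n d 1)"
      have p: "Mk n d 1 > 0" by (rule m1_pos[OF ds])
      define D where "D = real (d 1)"
      have Di: "\<And>i. i \<in> {1..n} \<Longrightarrow> real (d i) \<le> D"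
        using ds unfolding degseq_def D_def by auto
      have D2: "D^2 \<le> K^2 * Mk n d 1"
      proof -
        have "D^2 \<le> (K * sqrt (Mk n d 1))^2" using dK unfolding D_def by (intro power_mono) auto
        also have "\<dots> = K^2 * Mk n d 1" using p by (simp add: power_mult_distrib)
        finally show ?thesis .
      qed
      define A' where "A' = (Mk n d 3 + Mk n d 1) * (Mk n d 2 + Mk n d 1)^2"
      have m2: "Mk n d 2 \<ge> 0" and m3: "Mk n d 3 \<ge> 0" by (rule Mk_nonneg)+
      have g1: "Mk n d 3 * (Mk n d 2 * Mk n d 2) \<le> A'" unfolding A'_def
        using p m2 m3 by (intro mult_mono) (auto simp: power2_eq_square algebra_simps)
      have "xi n d \<le> 10 * (A' / (Mk n d 1)^4) + D^2 * Mk n d 2 * Mk n d 2 * Mk n d 3 / Mk n d 1 ^ 4 / Mk n d 1"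
        unfolding A'_def by (rule xi_gen[OF ds U3_bd'[OF p Di]])
      also have "D^2 * Mk n d 2 * Mk n d 2 * Mk n d 3 / Mk n d 1 ^ 4 / Mk n d 1
          \<le> (K^2 * Mk n d 1) * (Mk n d 3 * (Mk n d 2 * Mk n d 2)) / Mk n d 1 ^ 4 / Mk n d 1"
      proof -
        have "D^2 * (Mk n d 3 * (Mk n d 2 * Mk n d 2)) \<le> (K^2 * Mk n d 1) * (Mk n d 3 * (Mk n d 2 * Mk n d 2))"
          using D2 m2 m3 by (intro mult_right_mono) auto
        then show ?thesis using p by (intro divide_right_mono) (auto simp: algebra_simps)
      qed
      also have "(K^2 * Mk n d 1) * (Mk n d 3 * (Mk n d 2 * Mk n d 2)) / Mk n d 1 ^ 4 / Mk n d 1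
          = K^2 * (Mk n d 3 * (Mk n d 2 * Mk n d 2) / Mk n d 1 ^ 4)"
        using p by (simp add: field_simps eval_nat_numeral)
      also have "\<dots> \<le> K^2 * (A' / Mk n d 1 ^ 4)"
        using g1 p by (intro mult_left_mono divide_right_mono) auto
      finally show "xi n d \<le> (10 + K^2) * ((Mk n d 3 + Mk n d 1) * (Mk n d 2 + Mk n d 1)^2 / (Mk n d 1)^4)"
        unfolding A'_def by (simp only: distrib_right)
    qed
  qed
qed
end
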